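(* Let $K$ be a perfect field, $k\subset K$ a subfield, and $\lambda\in\operatorname{Emb}(K)$ with $|\lambda^G|=n<\infty$. Let $\overline{\lambda}$ be an extension of $\lambda$ to $\overline{K}$, let $\overline{\mu}$ be the inverse of $\overline{\lambda}$, and let $\mu=\overline{\mu}|_K$. Then $\overline{\lambda}$ induces an isomorphism of two-sided vector spaces ${}_{\mu}(\mu(K)\vee K)_{\operatorname{id}}\to V(\lambda)$.
   Context: $\overline{K}$ is a fixed algebraic closure of $K$. A two-sided vector space is a $K\otimes_kK$-module. $\operatorname{Emb}(K)$ is the set of $k$-linear field embeddings $K\to\overline{K}$; $G=\operatorname{Aut}(\overline{K}/K)$ acts by left composition, with orbits $\lambda^G$. $K(\lambda)$ is the composite of $K$ and $\lambda(K)$ in $\overline{K}$, and $V(\lambda)$ is the two-sided vector space with underlying set $K(\lambda)$ and action $a\cdot v\cdot b=av\lambda(b)$. $\mu(K)\vee K$ denotes the composite of $\mu(K)$ and $K$ in $\overline{K}$. For $k$-linear embeddings $\gamma,\delta$ of $K$ into a field $L$, ${}_\gamma L_\delta$ is the two-sided vector space with underlying set $L$ and action $(a\otimes b)\cdot c=\gamma(a)\delta(b)c$. *)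

theory Defs
  imports "HOL-Computational_Algebra.Polynomial" "HOL-Library.FuncSet"
begin

text \<open>Throughout, the ambient type 'a plays the role of the fixed algebraic closure of K;
  the fields k and K are subfields (subsets) of it.\<close>

definition is_subfield :: "'a::field set \<Rightarrow> bool" where
  "is_subfield S \<longleftrightarrow> 0 \<in> S \<and> 1 \<in> S \<and>
     (\<forall>x\<in>S. \<forall>y\<in>S. x + y \<in> S \<and> x * y \<in> S) \<and>
     (\<forall>x\<in>S. - x \<in> S \<and> inverse x \<in> S)"

definition composite :: "'a::field set \<Rightarrow> 'a set \<Rightarrow> 'a set" where
  "composite A B = \<Inter> {S. is_subfield S \<and> A \<union> B \<subseteq> S}"

definition alg_closed_type :: "'a::field itself \<Rightarrow> bool" where
  "alg_closed_type _ \<longleftrightarrow> (\<forall>p :: 'a poly. degree p > 0 \<longrightarrow> (\<exists>x. poly p x = 0))"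

definition algebraic_over :: "'a::field set \<Rightarrow> 'a \<Rightarrow> bool" where
  "algebraic_over K x \<longleftrightarrow> (\<exists>p. p \<noteq> 0 \<and> (\<forall>i. coeff p i \<in> K) \<and> poly p x = 0)"

definition is_algebraic_closure_of :: "'a::field set \<Rightarrow> bool" where
  "is_algebraic_closure_of K \<longleftrightarrow> alg_closed_type TYPE('a) \<and> (\<forall>x. algebraic_over K x)"

definition perfect_field :: "'a::field set \<Rightarrow> bool" where
  "perfect_field K \<longleftrightarrow> CHAR('a) = 0 \<or> (\<forall>x\<in>K. \<exists>y\<in>K. y ^ CHAR('a) = x)"

definition Emb :: "'a::field set \<Rightarrow> 'a set \<Rightarrow> ('a \<Rightarrow> 'a) set" where
  "Emb k K = {f. (\<forall>x. x \<notin> K \<longrightarrow> f x = undefined) \<and> f 1 = 1 \<and>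
      (\<forall>x\<in>K. \<forall>y\<in>K. f (x + y) = f x + f y \<and> f (x * y) = f x * f y) \<and>
      (\<forall>c\<in>k. \<forall>x\<in>K. f (c * x) = c * f x)}"

definition field_endo :: "('a::field \<Rightarrow> 'a) \<Rightarrow> bool" where
  "field_endo f \<longleftrightarrow> f 1 = 1 \<and> (\<forall>x y. f (x + y) = f x + f y \<and> f (x * y) = f x * f y)"

definition Gal :: "'a::field set \<Rightarrow> ('a \<Rightarrow> 'a) set" where
  "Gal K = {\<sigma>. bij \<sigma> \<and> field_endo \<sigma> \<and> (\<forall>x\<in>K. \<sigma> x = x)}"

definition orbit :: "'a::field set \<Rightarrow> ('a \<Rightarrow> 'a) \<Rightarrow> ('a \<Rightarrow> 'a) set" where
  "orbit K lam = {restrict (\<sigma> \<circ> lam) K | \<sigma>. \<sigma> \<in> Gal K}"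

text \<open>Action of a pure tensor a \<otimes> b on the two-sided space _\<gamma> L _\<delta>:
  (a \<otimes> b) \<cdot> c = \<gamma>(a) \<delta>(b) c.\<close>
definition tw_act :: "('a::field \<Rightarrow> 'a) \<Rightarrow> ('a \<Rightarrow> 'a) \<Rightarrow> 'a \<Rightarrow> 'a \<Rightarrow> 'a \<Rightarrow> 'a" where
  "tw_act \<gamma> \<delta> a b c = \<gamma> a * \<delta> b * c"

text \<open>Isomorphism of two-sided K-vector spaces (K \<otimes>_k K-modules) given by underlying sets V, W
  and actions of pure tensors; since pure tensors generate K \<otimes>_k K additively, an additive
  bijection compatible with pure tensors is exactly a module isomorphism.\<close>
definition tsv_iso ::
  "'a::field set \<Rightarrow> 'a set \<Rightarrow> ('a \<Rightarrow> 'a \<Rightarrow> 'a \<Rightarrow> 'a) \<Rightarrow> 'a set \<Rightarrow> ('a \<Rightarrow> 'a \<Rightarrow> 'a \<Rightarrow> 'a)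
     \<Rightarrow> ('a \<Rightarrow> 'a) \<Rightarrow> bool" where
  "tsv_iso K V actV W actW f \<longleftrightarrow> bij_betw f V W \<and>
     (\<forall>x\<in>V. \<forall>y\<in>V. f (x + y) = f x + f y) \<and>
     (\<forall>a\<in>K. \<forall>b\<in>K. \<forall>v\<in>V. f (actV a b v) = actW a b (f v))"

end

theory Submission
  imports Defs
begin

lemma fe_basic:
  assumes "field_endo f"
  shows "f 0 = 0" "f (- x) = - f x" "f (inverse x) = inverse (f x)"
proof -
  have a: "\<And>x y. f (x + y) = f x + f y" "\<And>x y. f (x * y) = f x * f y" "f 1 = 1"
    using assms unfolding field_endo_def by auto
  have "f 0 + f 0 = f 0 + 0" using a(1)[of 0 0] by simp
  then show z: "f 0 = 0" by (rule add_left_imp_eq)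
  have "f x + f (- x) = 0" using a(1)[of x "-x"] z by simp
  then show "f (- x) = - f x" by (simp add: eq_neg_iff_add_eq_0 add.commute)
  show "f (inverse x) = inverse (f x)"
  proof (cases "x = 0")
    case True then show ?thesis using z by simp
  next
    case False
    then have "f x * f (inverse x) = 1" using a(2)[of x "inverse x"] a(3) by simp
    then show ?thesis by (metis inverse_unique)
  qed
qed

lemma preimage_subfield:
  assumes "field_endo f" "is_subfield T"
  shows "is_subfield (f -` T)"
  using assms fe_basic[OF assms(1)] unfolding is_subfield_def field_endo_def by auto

lemma image_composite_sub:
  assumes "field_endo f"
  shows "f ` composite A B \<subseteq> composite (f ` A) (f ` B)"
proof
  fix y assume "y \<in> f ` composite A B"
  then obtain x where x: "x \<in> composite A B" "y = f x" by auto
  show "y \<in> composite (f ` A) (f ` B)"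
    unfolding composite_def
  proof
    fix T assume "T \<in> {S. is_subfield S \<and> f ` A \<union> f ` B \<subseteq> S}"
    then have T: "is_subfield T" "f ` A \<union> f ` B \<subseteq> T" by auto
    have "is_subfield (f -` T)" "A \<union> B \<subseteq> f -` T"
      using preimage_subfield[OF assms T(1)] T(2) by auto
    then have "x \<in> f -` T" using x(1) unfolding composite_def by blast
    then show "y \<in> T" using x(2) by simp
  qed
qed

lemma inv_field_endo:
  assumes "field_endo f" "bij f"
  shows "field_endo (inv f)"
proof -
  have fi: "\<And>y. f (inv f y) = y" using assms(2) by (simp add: bij_is_surj surj_f_inv_f)
  have ifi: "\<And>x. inv f (f x) = x" using assms(2) by (simp add: bij_is_inj)
  have a: "\<And>x y. f (x + y) = f x + f y" "\<And>x y. f (x * y) = f x * f y" "f 1 = 1"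
    using assms unfolding field_endo_def by auto
  show ?thesis unfolding field_endo_def
  proof (intro conjI allI)
    show "inv f 1 = 1" by (metis a(3) ifi)
    fix x y
    show "inv f (x + y) = inv f x + inv f y" by (metis a(1) fi ifi)
    show "inv f (x * y) = inv f x * inv f y" by (metis a(2) fi ifi)
  qed
qed

lemma image_composite:
  assumes "field_endo f" "bij f"
  shows "f ` composite A B = composite (f ` A) (f ` B)"
proof
  show "f ` composite A B \<subseteq> composite (f ` A) (f ` B)" by (rule image_composite_sub[OF assms(1)])
  have fi: "\<And>y. f (inv f y) = y" using assms(2) by (simp add: bij_is_surj surj_f_inv_f)
  have ifi: "\<And>x. inv f (f x) = x" using assms(2) by (simp add: bij_is_inj)
  have i1: "\<And>X. inv f ` f ` X = X" using ifi by (simp add: image_comp)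
  have "inv f ` composite (f ` A) (f ` B) \<subseteq> composite A B"
    using image_composite_sub[OF inv_field_endo[OF assms], of "f ` A" "f ` B"] i1 by simp
  then have "f ` inv f ` composite (f ` A) (f ` B) \<subseteq> f ` composite A B" by blast
  then show "composite (f ` A) (f ` B) \<subseteq> f ` composite A B"
    using fi by (simp add: image_comp)
qed

theorem lemma3p10:
  fixes k K :: "'a::field set" and lam lambar :: "'a \<Rightarrow> 'a" and n :: nat
  assumes "is_subfield K" and "is_subfield k" and "k \<subseteq> K"
    and "is_algebraic_closure_of K"
    and "perfect_field K"
    and "lam \<in> Emb k K"
    and "finite (orbit K lam)" and "card (orbit K lam) = n"
    and "field_endo lambar" and "bij lambar" and "\<forall>x\<in>K. lambar x = lam x"
  shows "tsv_iso K (composite (restrict (inv lambar) K ` K) K)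
           (tw_act (restrict (inv lambar) K) id)
           (composite K (lam ` K)) (tw_act id lam) lambar"
proof -
  have fi: "\<And>y. lambar (inv lambar y) = y" using assms(10) by (simp add: bij_is_surj surj_f_inv_f)
  have a: "\<And>x y. lambar (x + y) = lambar x + lambar y" "\<And>x y. lambar (x * y) = lambar x * lambar y"
    using assms(9) unfolding field_endo_def by auto
  have e1: "restrict (inv lambar) K ` K = inv lambar ` K" by auto
  have e2: "lambar ` inv lambar ` K = K" using fi by (simp add: image_comp)
  have e3: "lambar ` K = lam ` K" using assms(11) by auto
  have img: "lambar ` composite (restrict (inv lambar) K ` K) K = composite K (lam ` K)"
    using image_composite[OF assms(9,10)] e1 e2 e3 by simp
  have "bij_betw lambar (composite (restrict (inv lambar) K ` K) K) (composite K (lam ` K))"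
    using img assms(10) unfolding bij_betw_def by (meson bij_def inj_on_subset subset_UNIV)
  moreover have "\<forall>a\<in>K. \<forall>b\<in>K. \<forall>v. lambar (tw_act (restrict (inv lambar) K) id a b v)
        = tw_act id lam a b (lambar v)"
    unfolding tw_act_def using a fi assms(11) by simp
  ultimately show ?thesis unfolding tsv_iso_def using a by simp
qed

end
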